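(* Let $m\ge 2$, let $D_m=\langle r,s\mid r^m=e,\ s^2=e,\ srs=r^{-1}\rangle$, let $\mathcal I=\{sr^k: 0\le k<m\}$ be its set of reflections, and let $H$ be an abelian group. (I) If $m$ is odd, then $D_m=\langle\mathcal I\rangle$ and for every $a,b\in\mathcal I$ there exists $t\in D_m$ with $t^2=ab$; consequently $S_1(D_m,H)=S_{1,2}(D_m,H)=\mathrm{Hom}(D_m,H)$. (II) If $m$ is even, this square-root property may fail: for example, in $D_4$ the product $s\cdot(sr)=r$ of two reflections is not a square in $D_4$.
   Context: $H$ is written additively. For a group $G$ with identity $e$, $S_1(G,H)$ is the set of $f:G\to H$ with $f(e)=0$ and $f(xy)+f(xy^{-1})=2f(x)$ for all $x,y\in G$; $S_{1,2}(G,H)$ is the subset of those also satisfying $f(xy)+f(x^{-1}y)=2f(y)$ for all $x,y\in G$. *)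

theory Defs
  imports "HOL-Algebra.Algebra"
begin

text \<open>Concrete model of the dihedral group D_m of order 2m: the pair (a,k) stands
for s^a r^k (a :: bool, 0 \<le> k < m).  Using r^j s = s r^(-j):
 (s^a r^j)(s^b r^k) = s^(a xor b) r^((if b then -j else j) + k).\<close>
definition dihedral :: "nat \<Rightarrow> (bool \<times> int) monoid" where
  "dihedral m = \<lparr> carrier = UNIV \<times> {0..<int m},
     monoid.mult = (\<lambda>(a, j) (b, k). (a \<noteq> b, ((if b then - j else j) + k) mod int m)),
     monoid.one = (False, 0) \<rparr>"

definition rot :: "nat \<Rightarrow> bool \<times> int" where
  "rot m = (False, 1 mod int m)"

definition refl0 :: "bool \<times> int" where
  "refl0 = (True, 0)"

definition reflections :: "nat \<Rightarrow> (bool \<times> int) set" where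
  "reflections m = {refl0 \<otimes>\<^bsub>dihedral m\<^esub> (rot m [^]\<^bsub>dihedral m\<^esub> k) | k. k < m}"

definition S1 :: "('a, 'b) monoid_scheme \<Rightarrow> ('a \<Rightarrow> 'h::ab_group_add) set" where
  "S1 G = {f. f \<one>\<^bsub>G\<^esub> = 0 \<and>
     (\<forall>x\<in>carrier G. \<forall>y\<in>carrier G.
        f (x \<otimes>\<^bsub>G\<^esub> y) + f (x \<otimes>\<^bsub>G\<^esub> inv\<^bsub>G\<^esub> y) = f x + f x)}"

definition S12 :: "('a, 'b) monoid_scheme \<Rightarrow> ('a \<Rightarrow> 'h::ab_group_add) set" where
  "S12 G = {f. f \<in> S1 G \<and>
     (\<forall>x\<in>carrier G. \<forall>y\<in>carrier G.
        f (x \<otimes>\<^bsub>G\<^esub> y) + f (inv\<^bsub>G\<^esub> x \<otimes>\<^bsub>G\<^esub> y) = f y + f y)}"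

definition Hom_add :: "('a, 'b) monoid_scheme \<Rightarrow> ('a \<Rightarrow> 'h::ab_group_add) set" where
  "Hom_add G = {f. \<forall>x\<in>carrier G. \<forall>y\<in>carrier G. f (x \<otimes>\<^bsub>G\<^esub> y) = f x + f y}"

end

theory Submission
  imports Defs
begin


lemma dmult: "(a,j) \<otimes>\<^bsub>dihedral m\<^esub> (b,k) = (a\<noteq>b, ((if b then -j else j)+k) mod int m)"
  by (simp add: dihedral_def)
lemma dcar: "carrier (dihedral m) = UNIV \<times> {0..<int m}"
  by (simp add: dihedral_def)
lemma d_one: "\<one>\<^bsub>dihedral m\<^esub> = (False,0)"
  by (simp add: dihedral_def)

lemma dgroup: assumes "m > 0" shows "group (dihedral m)"
proof (rule groupI)
  fix x y assume "x \<in> carrier (dihedral m)" "y \<in> carrier (dihedral m)"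
  then show "x \<otimes>\<^bsub>dihedral m\<^esub> y \<in> carrier (dihedral m)"
    using assms by (cases x; cases y) (simp add: dmult dcar)
next
  show "\<one>\<^bsub>dihedral m\<^esub> \<in> carrier (dihedral m)" using assms by (simp add: d_one dcar)
next
  fix x y z
  show "x \<otimes>\<^bsub>dihedral m\<^esub> y \<otimes>\<^bsub>dihedral m\<^esub> z = x \<otimes>\<^bsub>dihedral m\<^esub> (y \<otimes>\<^bsub>dihedral m\<^esub> z)"
    by (cases x; cases y; cases z) (auto simp: dmult mod_simps algebra_simps)
next
  fix x assume "x \<in> carrier (dihedral m)"
  then show "\<one>\<^bsub>dihedral m\<^esub> \<otimes>\<^bsub>dihedral m\<^esub> x = x"
    by (cases x) (auto simp: dmult d_one dcar)
next
  fix x assume x: "x \<in> carrier (dihedral m)"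
  obtain a i where xe: "x = (a,i)" by (cases x)
  show "\<exists>y\<in>carrier (dihedral m). y \<otimes>\<^bsub>dihedral m\<^esub> x = \<one>\<^bsub>dihedral m\<^esub>"
    apply (rule bexI[where x="if a then (a,i) else (False, (-i) mod int m)"])
    using x assms by (auto simp: xe dmult d_one dcar mod_simps)
qed

lemma dinv: assumes "m > 0" "0 \<le> i" "i < int m"
  shows "inv\<^bsub>dihedral m\<^esub> (a,i) = (if a then (a,i) else (False, (-i) mod int m))"
  apply (rule group.inv_equality[OF dgroup[OF assms(1)]])
  using assms by (auto simp: dmult d_one dcar mod_simps)

lemma dpow: "rot m [^]\<^bsub>dihedral m\<^esub> (k::nat) = (False, int k mod int m)"
  by (induction k) (auto simp: rot_def dmult d_one mod_simps add.commute)


lemma drefl: "reflections m = {True} \<times> {0..<int m}"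
proof -
  have e: "refl0 \<otimes>\<^bsub>dihedral m\<^esub> (rot m [^]\<^bsub>dihedral m\<^esub> k) = (True, int k mod int m)" for k
    by (simp add: dpow refl0_def dmult)
  show ?thesis
  proof (intro Set.set_eqI iffI)
    fix x assume "x \<in> reflections m"
    then obtain k where "k < m" "x = (True, int k mod int m)" unfolding reflections_def e by auto
    then show "x \<in> {True} \<times> {0..<int m}" by auto
  next
    fix x assume "x \<in> {True} \<times> {0..<int m}"
    then obtain i where i: "x = (True, i)" "0 \<le> i" "i < int m" by auto
    then have "x = (True, int (nat i) mod int m)" "nat i < m" by auto
    then show "x \<in> reflections m" unfolding reflections_def e by blast
  qed
qed

lemma half: assumes "odd m" shows "(2 * (i * ((int m + 1) div 2))) mod int m = i mod int m"
proof -
  obtain t where t: "m = 2*t+1" using assms oddE by blast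
  have q: "(int m + 1) div 2 = int t + 1" using t by simp
  have "2 * (i * ((int m + 1) div 2)) = i + int m * i" unfolding q t by (simp add: algebra_simps)
  then show ?thesis by simp
qed

lemma half2: assumes "odd m"
  shows "((i * ((int m + 1) div 2)) mod int m + (i * ((int m + 1) div 2)) mod int m) mod int m = i mod int m"
proof -
  have "((i * ((int m + 1) div 2)) mod int m + (i * ((int m + 1) div 2)) mod int m) mod int m
     = (2 * (i * ((int m + 1) div 2))) mod int m" unfolding mod_add_eq mult_2 ..
  then show ?thesis using half[OF assms] by simp
qed

lemma gen_all: assumes "m > 0"
  shows "generate (dihedral m) (reflections m) = carrier (dihedral m)"
proof
  show "generate (dihedral m) (reflections m) \<subseteq> carrier (dihedral m)"
    by (rule group.generate_incl[OF dgroup[OF assms]]) (auto simp: drefl dcar)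
next
  show "carrier (dihedral m) \<subseteq> generate (dihedral m) (reflections m)"
  proof
    fix x assume x: "x \<in> carrier (dihedral m)"
    obtain a i where xe: "x = (a,i)" by (cases x)
    have i: "0 \<le> i" "i < int m" using x xe by (auto simp: dcar)
    show "x \<in> generate (dihedral m) (reflections m)"
    proof (cases a)
      case True
      then show ?thesis using i xe by (auto intro: generate.incl simp: drefl)
    next
      case False
      have "(True,0) \<otimes>\<^bsub>dihedral m\<^esub> (True,i) = x" using False i xe by (simp add: dmult)
      moreover have "(True,0) \<in> generate (dihedral m) (reflections m)" "(True,i) \<in> generate (dihedral m) (reflections m)"
        using i assms by (auto intro: generate.incl simp: drefl)
      ultimately show ?thesis by (metis generate.eng)
    qed
  qed
qed

lemma sqrt_ex: assumes "odd m" "a \<in> reflections m" "b \<in> reflections m"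
  shows "\<exists>t\<in>carrier (dihedral m). t \<otimes>\<^bsub>dihedral m\<^esub> t = a \<otimes>\<^bsub>dihedral m\<^esub> b"
proof -
  have m: "m > 0" using assms(1) by (cases m) auto
  obtain i j where e: "a = (True,i)" "b = (True,j)" using assms by (auto simp: drefl)
  let ?k = "((j - i) * ((int m + 1) div 2)) mod int m"
  have "(False, ?k) \<otimes>\<^bsub>dihedral m\<^esub> (False, ?k) = a \<otimes>\<^bsub>dihedral m\<^esub> b"
    using half2[OF assms(1), of "j - i"] by (simp add: dmult e)
  moreover have "(False, ?k) \<in> carrier (dihedral m)" using m by (simp add: dcar)
  ultimately show ?thesis by blast
qed

lemma hom_S12: assumes "group G" shows "Hom_add G \<subseteq> S12 G"
proof
  fix f assume f: "f \<in> Hom_add G"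
  then have h: "\<And>x y. x \<in> carrier G \<Longrightarrow> y \<in> carrier G \<Longrightarrow> f (x \<otimes>\<^bsub>G\<^esub> y) = f x + f y"
    by (auto simp: Hom_add_def)
  have o: "f \<one>\<^bsub>G\<^esub> = 0"
    using h[of "\<one>\<^bsub>G\<^esub>" "\<one>\<^bsub>G\<^esub>"] group.is_monoid[OF assms] by (simp add: monoid.one_closed)
  have iv: "f (inv\<^bsub>G\<^esub> y) = - f y" if "y \<in> carrier G" for y
    using h[of y "inv\<^bsub>G\<^esub> y"] that o assms
    by (simp add: group.inv_closed group.r_inv eq_neg_iff_add_eq_0 add.commute)
  show "f \<in> S12 G" unfolding S12_def S1_def
    using o h iv assms by (auto simp: group.inv_closed)
qed

lemma S12_S1: "S12 G \<subseteq> S1 G" by (auto simp: S12_def)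

lemma S1_hom: assumes "odd m" shows "S1 (dihedral m) \<subseteq> Hom_add (dihedral m)"
proof
  fix f :: "bool \<times> int \<Rightarrow> 'h::ab_group_add"
  assume f: "f \<in> S1 (dihedral m)"
  have m: "m > 0" using assms(1) by (cases m) auto
  let ?M = "int m"
  let ?q = "(int m + 1) div 2"
  have f0: "f (False,0) = 0" using f by (simp add: S1_def d_one)
  have E: "\<And>x y. x \<in> carrier (dihedral m) \<Longrightarrow> y \<in> carrier (dihedral m) \<Longrightarrow>
     f (x \<otimes>\<^bsub>dihedral m\<^esub> y) + f (x \<otimes>\<^bsub>dihedral m\<^esub> inv\<^bsub>dihedral m\<^esub> y) = f x + f x"
    using f by (simp add: S1_def)
  have c1: "f (True,j) + f (True,j) = 0" if "0 \<le> j" "j < ?M" for j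
    using E[of "(True,j)" "(True,j)"] that m f0 by (simp add: dcar dmult dinv)
  have c2: "f (False,j) + f (False,j) = 0" if "0 \<le> j" "j < ?M" for j
  proof -
    have "f (True, (-j) mod ?M) + f (True, (-j) mod ?M) = f (False,j) + f (False,j)"
      using E[of "(False,j)" "(True,0)"] that m by (simp add: dcar dmult dinv)
    moreover have "f (True, (-j) mod ?M) + f (True, (-j) mod ?M) = 0" using c1 m by simp
    ultimately show ?thesis by simp
  qed
  have hk: "\<exists>k. 0 \<le> k \<and> k < ?M \<and> (k + k) mod ?M = i" if "0 \<le> i" "i < ?M" for i
  proof (intro exI conjI)
    show "0 \<le> (i * ?q) mod ?M" "(i * ?q) mod ?M < ?M" using m by simp_all
    show "((i * ?q) mod ?M + (i * ?q) mod ?M) mod ?M = i" using half2[OF assms, of i] that by simp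
  qed
  have c3: "f (False,i) = 0" if ii: "0 \<le> i" "i < ?M" for i
  proof -
    obtain k where k: "0 \<le> k" "k < ?M" "(k + k) mod ?M = i" using hk[OF ii] by blast
    have "f (False, (k + k) mod ?M) + f (False, (k + (- k) mod ?M) mod ?M) = f (False, k) + f (False, k)"
      using E[of "(False,k)" "(False,k)"] m k(1,2) by (simp only: dcar dmult dinv) (simp add: dmult)
    moreover have "(k + (- k) mod ?M) mod ?M = 0" by (simp add: mod_add_right_eq)
    moreover have "f (False, k) + f (False, k) = 0" using c2 k by blast
    ultimately show ?thesis using f0 k(3) by simp
  qed
  define c where "c = f (True,0)"
  have cc: "c + c = 0" using c1[of 0] m c_def by simp
  have c4: "f (True,i) = c" if ii: "0 \<le> i" "i < ?M" for i
  proof -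
    obtain k where k: "0 \<le> k" "k < ?M" "(k + k) mod ?M = i" using hk[OF ii] by blast
    have "f (True, (k + k) mod ?M) + f (True, (k + (- k) mod ?M) mod ?M) = f (True, k) + f (True, k)"
      using E[of "(True,k)" "(False,k)"] m k(1,2) by (simp only: dcar dmult dinv) (simp add: dmult)
    moreover have "(k + (- k) mod ?M) mod ?M = 0" by (simp add: mod_add_right_eq)
    moreover have "f (True, k) + f (True, k) = 0" using c1 k by blast
    ultimately have "f (True,i) + c = 0" using k(3) by (simp add: c_def)
    then have "f (True,i) = - c" by (simp add: eq_neg_iff_add_eq_0)
    also have "- c = c" using cc by (simp add: neg_eq_iff_add_eq_0)
    finally show ?thesis .
  qed
  have fv: "f (a,i) = (if a then c else 0)" if "0 \<le> i" "i < ?M" for a i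
    using c3 c4 that by auto
  show "f \<in> Hom_add (dihedral m)" unfolding Hom_add_def
  proof (intro CollectI ballI)
    fix x y assume x: "x \<in> carrier (dihedral m)" and y: "y \<in> carrier (dihedral m)"
    obtain a i b j where e: "x = (a,i)" "y = (b,j)" by (cases x, cases y)
    have r: "0 \<le> i" "i < ?M" "0 \<le> j" "j < ?M" using x y e by (auto simp: dcar)
    have "f (x \<otimes>\<^bsub>dihedral m\<^esub> y) = (if a \<noteq> b then c else 0)"
      unfolding e dmult using m by (intro fv) auto
    then show "f (x \<otimes>\<^bsub>dihedral m\<^esub> y) = f x + f y"
      using fv[OF r(1,2), of a] fv[OF r(3,4), of b] e cc by auto
  qed
qed

lemma d4: "refl0 \<in> reflections 4 \<and>
          refl0 \<otimes>\<^bsub>dihedral 4\<^esub> rot 4 \<in> reflections 4 \<and>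
          refl0 \<otimes>\<^bsub>dihedral 4\<^esub> (refl0 \<otimes>\<^bsub>dihedral 4\<^esub> rot 4) = rot 4 \<and>
          \<not> (\<exists>t\<in>carrier (dihedral 4). t \<otimes>\<^bsub>dihedral 4\<^esub> t = rot 4)"
proof (intro conjI)
  show "\<not> (\<exists>t\<in>carrier (dihedral 4). t \<otimes>\<^bsub>dihedral 4\<^esub> t = rot 4)"
  proof
    assume "\<exists>t\<in>carrier (dihedral 4). t \<otimes>\<^bsub>dihedral 4\<^esub> t = rot 4"
    then obtain a j where "0 \<le> j" "j < 4" "(a,j) \<otimes>\<^bsub>dihedral 4\<^esub> (a,j) = rot 4"
      by (auto simp: dcar)
    then show False by (cases a) (auto simp: dmult rot_def, presburger)
  qed
qed (auto simp: drefl refl0_def rot_def dmult)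

theorem mainTheorem8:
  fixes m :: nat
  assumes "m \<ge> 2"
  shows "(odd m \<longrightarrow>
            group (dihedral m) \<and>
            generate (dihedral m) (reflections m) = carrier (dihedral m) \<and>
            (\<forall>a\<in>reflections m. \<forall>b\<in>reflections m. \<exists>t\<in>carrier (dihedral m).
                t \<otimes>\<^bsub>dihedral m\<^esub> t = a \<otimes>\<^bsub>dihedral m\<^esub> b) \<and>
            (S1 (dihedral m) :: (bool \<times> int \<Rightarrow> 'h::ab_group_add) set) = S12 (dihedral m) \<and>
            (S12 (dihedral m) :: (bool \<times> int \<Rightarrow> 'h) set) = Hom_add (dihedral m))
       \<and> (refl0 \<in> reflections 4 \<and>
          refl0 \<otimes>\<^bsub>dihedral 4\<^esub> rot 4 \<in> reflections 4 \<and>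
          refl0 \<otimes>\<^bsub>dihedral 4\<^esub> (refl0 \<otimes>\<^bsub>dihedral 4\<^esub> rot 4) = rot 4 \<and>
          \<not> (\<exists>t\<in>carrier (dihedral 4). t \<otimes>\<^bsub>dihedral 4\<^esub> t = rot 4))"
  proof -
  have P1: "odd m \<longrightarrow>
            group (dihedral m) \<and>
            generate (dihedral m) (reflections m) = carrier (dihedral m) \<and>
            (\<forall>a\<in>reflections m. \<forall>b\<in>reflections m. \<exists>t\<in>carrier (dihedral m).
                t \<otimes>\<^bsub>dihedral m\<^esub> t = a \<otimes>\<^bsub>dihedral m\<^esub> b) \<and>
            (S1 (dihedral m) :: (bool \<times> int \<Rightarrow> 'h::ab_group_add) set) = S12 (dihedral m) \<and>
            (S12 (dihedral m) :: (bool \<times> int \<Rightarrow> 'h) set) = Hom_add (dihedral m)"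
  proof (intro impI conjI)
  assume o: "odd m"
  have m: "m > 0" using assms by simp
  have g: "group (dihedral m)" using dgroup[OF m] .
  show "group (dihedral m)" using g .
  show "generate (dihedral m) (reflections m) = carrier (dihedral m)" using gen_all[OF m] .
  show "\<forall>a\<in>reflections m. \<forall>b\<in>reflections m. \<exists>t\<in>carrier (dihedral m).
                t \<otimes>\<^bsub>dihedral m\<^esub> t = a \<otimes>\<^bsub>dihedral m\<^esub> b" by (intro ballI sqrt_ex[OF o])
  have A: "(S1 (dihedral m) :: (bool \<times> int \<Rightarrow> 'h::ab_group_add) set) \<subseteq> Hom_add (dihedral m)" by (rule S1_hom[OF o])
  have B: "(Hom_add (dihedral m) :: (bool \<times> int \<Rightarrow> 'h::ab_group_add) set) \<subseteq> S12 (dihedral m)" by (rule hom_S12[OF g])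
  have C: "(S12 (dihedral m) :: (bool \<times> int \<Rightarrow> 'h::ab_group_add) set) \<subseteq> S1 (dihedral m)" by (rule S12_S1)
  show "(S1 (dihedral m) :: (bool \<times> int \<Rightarrow> 'h::ab_group_add) set) = S12 (dihedral m)" by (rule subset_antisym[OF order_trans[OF A B] C])
  show "(S12 (dihedral m) :: (bool \<times> int \<Rightarrow> 'h::ab_group_add) set) = Hom_add (dihedral m)" by (rule subset_antisym[OF order_trans[OF C A] B])
  qed
  show ?thesis by (rule conjI[OF P1 d4])
qed

end
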